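(* Let $K$ be a field, let $A=\{{\bf a}_1,\ldots,{\bf a}_n\}\subset\mathbb{Z}^m$ with $\mathbb{N}A$ pointed, and let $I_A\subset K[x_1,\ldots,x_n]$ be its toric ideal. Then $I_A$ is radical splittable if and only if there exist a set $C\subset\ker_{\mathbb{Z}}(A)$ such that $\{B({\bf u})\mid{\bf u}\in C\}$ is a minimal system of binomial generators of $I_A$ up to radical, and sets $C_1,C_2$ with $C=C_1\cup C_2$, $\mathrm{span}_{\mathbb{Q}}(C_1)\subsetneqq\ker_{\mathbb{Q}}(A)$ and $\mathrm{span}_{\mathbb{Q}}(C_2)\subsetneqq\ker_{\mathbb{Q}}(A)$.
   Context: $\ker_{\mathbb{Q}}(A)=\{{\bf u}\in\mathbb{Q}^n\mid \sum u_i{\bf a}_i={\bf 0}\}$, $\ker_{\mathbb{Z}}(A)=\ker_{\mathbb{Q}}(A)\cap\mathbb{Z}^n$; $\mathbb{N}A$ pointed means $\ker_{\mathbb{Z}}(A)\cap\mathbb{N}^n=\{{\bf 0}\}$. The toric ideal $I_A$ is the kernel of $K[x_1,\ldots,x_n]\to K[t_1^{\pm1},\ldots,t_m^{\pm1}]$, $x_i\mapsto{\bf t}^{{\bf a}_i}$; for ${\bf u}\in\ker_{\mathbb{Z}}(A)$, $B({\bf u})={\bf x}^{{\bf u}^+}-{\bf x}^{{\bf u}^-}$ with ${\bf u}^\pm\in\mathbb{N}^n$ the positive/negative parts of ${\bf u}$. $I_A$ is radical splittable if there exist toric ideals $I_{A_1},I_{A_2}\subset K[x_1,\ldots,x_n]$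 (each $A_i$ a configuration of $n$ integer vectors with $\mathbb{N}A_i$ pointed) with $I_A=\mathrm{rad}(I_{A_1}+I_{A_2})$ and $I_{A_i}\ne I_A$ for $i=1,2$. A minimal system of binomial generators of $I_A$ up to radical is a set $S$ of binomials with $\mathrm{rad}(S)=I_A$ such that no proper subset of $S$ has radical equal to $I_A$. $\mathrm{span}_{\mathbb{Q}}(C)$ denotes the $\mathbb{Q}$-linear span. *)

theory Defs
  imports Complex_Main "HOL-Library.Poly_Mapping"
begin

(* Polynomial ring K[x_i | i :: 'n] as ('n \<Rightarrow>\<^sub>0 nat) \<Rightarrow>\<^sub>0 'k (monomial exponents to coefficients).
  Laurent polynomial ring in t_1, t_2, ... as the group ring (nat \<Rightarrow>\<^sub>0 int) \<Rightarrow>\<^sub>0 'k.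
  A configuration is a map A :: 'n \<Rightarrow> (nat \<Rightarrow>\<^sub>0 int); it lies in Z^m if all entries
  beyond index m vanish. *)

type_synonym ('n, 'k) mpoly = "('n \<Rightarrow>\<^sub>0 nat) \<Rightarrow>\<^sub>0 'k"

definition in_Zm :: "nat \<Rightarrow> ('n \<Rightarrow> (nat \<Rightarrow>\<^sub>0 int)) \<Rightarrow> bool" where
  "in_Zm m A \<longleftrightarrow> (\<forall>i. Poly_Mapping.keys (A i) \<subseteq> {..<m})"

definition kerZ :: "('n::finite \<Rightarrow> (nat \<Rightarrow>\<^sub>0 int)) \<Rightarrow> ('n \<Rightarrow> int) set" where
  "kerZ A = {u. \<forall>j. (\<Sum>i\<in>UNIV. u i * Poly_Mapping.lookup (A i) j) = 0}"

definition kerQ :: "('n::finite \<Rightarrow> (nat \<Rightarrow>\<^sub>0 int)) \<Rightarrow> ('n \<Rightarrow> rat) set" where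
  "kerQ A = {u. \<forall>j. (\<Sum>i\<in>UNIV. u i * of_int (Poly_Mapping.lookup (A i) j)) = 0}"

definition pointed :: "('n::finite \<Rightarrow> (nat \<Rightarrow>\<^sub>0 int)) \<Rightarrow> bool" where
  "pointed A \<longleftrightarrow> (\<forall>u\<in>kerZ A. (\<forall>i. u i \<ge> 0) \<longrightarrow> (\<forall>i. u i = 0))"

definition var :: "'n \<Rightarrow> ('n, 'k::comm_ring_1) mpoly" where
  "var i = Poly_Mapping.single (Poly_Mapping.single i 1) 1"

definition lmono :: "(nat \<Rightarrow>\<^sub>0 int) \<Rightarrow> (nat \<Rightarrow>\<^sub>0 int) \<Rightarrow>\<^sub>0 'k::comm_ring_1" where
  "lmono v = Poly_Mapping.single v 1"

(* The K-algebra homomorphism x_i to t^(a_i), applied to p. *)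
definition toric_hom :: "('n::finite \<Rightarrow> (nat \<Rightarrow>\<^sub>0 int)) \<Rightarrow> ('n, 'k::comm_ring_1) mpoly
    \<Rightarrow> (nat \<Rightarrow>\<^sub>0 int) \<Rightarrow>\<^sub>0 'k" where
  "toric_hom A p = (\<Sum>\<alpha>\<in>Poly_Mapping.keys p. Poly_Mapping.single 0 (Poly_Mapping.lookup p \<alpha>) *
       (\<Prod>i\<in>UNIV. (lmono (A i)) ^ (Poly_Mapping.lookup \<alpha> i)))"

definition toric_ideal :: "('n::finite \<Rightarrow> (nat \<Rightarrow>\<^sub>0 int)) \<Rightarrow> ('n, 'k::comm_ring_1) mpoly set" where
  "toric_ideal A = {p. toric_hom A p = 0}"

definition binomial :: "('n::finite \<Rightarrow> int) \<Rightarrow> ('n, 'k::comm_ring_1) mpoly" where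
  "binomial u = (\<Prod>i\<in>UNIV. var i ^ nat (u i)) - (\<Prod>i\<in>UNIV. var i ^ nat (- u i))"

definition ideal_gen :: "'a::comm_ring_1 set \<Rightarrow> 'a set" where
  "ideal_gen S = {p. \<exists>F c. finite F \<and> F \<subseteq> S \<and> p = (\<Sum>f\<in>F. c f * f)}"

definition radical :: "'a::comm_ring_1 set \<Rightarrow> 'a set" where
  "radical I = {p. \<exists>k. p ^ k \<in> I}"

definition ideal_sum :: "'a::comm_ring_1 set \<Rightarrow> 'a set \<Rightarrow> 'a set" where
  "ideal_sum I J = {p + q | p q. p \<in> I \<and> q \<in> J}"

definition radical_splittable :: "('n::finite, 'k::field) mpoly set \<Rightarrow> bool" where
  "radical_splittable I \<longleftrightarrow>
     (\<exists>m1 m2 (A1 :: 'n \<Rightarrow> (nat \<Rightarrow>\<^sub>0 int)) (A2 :: 'n \<Rightarrow> (nat \<Rightarrow>\<^sub>0 int)).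
        in_Zm m1 A1 \<and> pointed A1 \<and> in_Zm m2 A2 \<and> pointed A2 \<and>
        I = radical (ideal_sum (toric_ideal A1) (toric_ideal A2)) \<and>
        toric_ideal A1 \<noteq> I \<and> toric_ideal A2 \<noteq> I)"

definition min_gen_up_to_radical :: "'a::comm_ring_1 set \<Rightarrow> 'a set \<Rightarrow> bool" where
  "min_gen_up_to_radical S I \<longleftrightarrow>
     radical (ideal_gen S) = I \<and> (\<forall>S'. S' \<subset> S \<longrightarrow> radical (ideal_gen S') \<noteq> I)"

definition qspan :: "('n \<Rightarrow> int) set \<Rightarrow> ('n \<Rightarrow> rat) set" where
  "qspan C = {v. \<exists>F c. finite F \<and> F \<subseteq> C \<and> v = (\<lambda>i. \<Sum>u\<in>F. c u * of_int (u i))}"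

end

theory Submission
  imports Defs "HOL-Library.Function_Algebras"
begin


lemma single_pow1: "(Poly_Mapping.single v (1::'b::comm_semiring_1) :: ('a::comm_monoid_add \<Rightarrow>\<^sub>0 'b)) ^ k
   = Poly_Mapping.single (\<Sum>j<k. v) 1"
  by (induction k) (simp_all add: mult_single add.commute)

lemma prod_single1: "finite F \<Longrightarrow> (\<Prod>i\<in>F. Poly_Mapping.single (f i) (1::'b::comm_semiring_1) :: ('a::comm_monoid_add \<Rightarrow>\<^sub>0 'b))
   = Poly_Mapping.single (\<Sum>i\<in>F. f i) 1"
  by (induction F rule: finite_induct) (simp_all add: mult_single)

lemma single_eq_single1: "(Poly_Mapping.single a (1::'b::zero_neq_one) = Poly_Mapping.single b 1) \<longleftrightarrow> a = b"
  by (metis lookup_single_eq lookup_single_not_eq zero_neq_one)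

lemma pm_expand: "p = (\<Sum>\<alpha>\<in>Poly_Mapping.keys p. Poly_Mapping.single \<alpha> (Poly_Mapping.lookup p \<alpha>))"
proof (rule poly_mapping_eqI)
  fix k
  show "Poly_Mapping.lookup p k = Poly_Mapping.lookup (\<Sum>\<alpha>\<in>Poly_Mapping.keys p. Poly_Mapping.single \<alpha> (Poly_Mapping.lookup p \<alpha>)) k"
    by (simp add: lookup_sum lookup_single when_def in_keys_iff)
qed

definition monoF :: "('n::finite \<Rightarrow> nat) \<Rightarrow> ('n, 'k::comm_ring_1) mpoly" where
  "monoF e = (\<Prod>i\<in>UNIV. var i ^ e i)"

lemma var_pow: "(var i :: ('n, 'k::comm_ring_1) mpoly) ^ k = Poly_Mapping.single (Poly_Mapping.single i k) 1"
proof -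
  have "(\<Sum>j<k. Poly_Mapping.single i (1::nat)) = Poly_Mapping.single i k"
    by (induction k) (simp_all del: sum_constant add: single_add[symmetric])
  then show ?thesis unfolding var_def single_pow1 by simp
qed

lemma monoF_single: "(monoF e :: ('n::finite, 'k::comm_ring_1) mpoly) = Poly_Mapping.single (\<Sum>i\<in>UNIV. Poly_Mapping.single i (e i)) 1"
  unfolding monoF_def var_pow by (simp add: prod_single1)

lemma sum_singles_lookup: "(\<Sum>i\<in>(UNIV::'n::finite set). Poly_Mapping.single i (Poly_Mapping.lookup \<alpha> i)) = \<alpha>"
proof (rule poly_mapping_eqI)
  fix k
  show "Poly_Mapping.lookup (\<Sum>i\<in>(UNIV::'n set). Poly_Mapping.single i (Poly_Mapping.lookup \<alpha> i)) k = Poly_Mapping.lookup \<alpha> k"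
    by (simp add: lookup_sum lookup_single when_def)
qed

lemma monoF_lookup: "(monoF (Poly_Mapping.lookup \<alpha>) :: ('n::finite, 'k::comm_ring_1) mpoly) = Poly_Mapping.single \<alpha> 1"
  by (simp add: monoF_single sum_singles_lookup)

lemma monoF_add: "(monoF (\<lambda>i. e i + f i) :: ('n::finite, 'k::comm_ring_1) mpoly) = monoF e * monoF f"
  unfolding monoF_def by (simp add: power_add prod.distrib)

lemma monoF_zero: "(monoF (\<lambda>i. 0) :: ('n::finite, 'k::comm_ring_1) mpoly) = 1"
  unfolding monoF_def by simp

definition MA :: "('n::finite \<Rightarrow> (nat \<Rightarrow>\<^sub>0 int)) \<Rightarrow> ('n \<Rightarrow>\<^sub>0 nat) \<Rightarrow> (nat \<Rightarrow>\<^sub>0 int) \<Rightarrow>\<^sub>0 'k::comm_ring_1" where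
  "MA A \<alpha> = (\<Prod>i\<in>UNIV. (lmono (A i)) ^ (Poly_Mapping.lookup \<alpha> i))"

lemma th_S:
  assumes "finite S" "Poly_Mapping.keys p \<subseteq> S"
  shows "toric_hom A p = (\<Sum>\<alpha>\<in>S. Poly_Mapping.single 0 (Poly_Mapping.lookup p \<alpha>) * MA A \<alpha>)"
  unfolding toric_hom_def MA_def
  by (rule sum.mono_neutral_left) (use assms in \<open>auto simp: in_keys_iff\<close>)

lemma th_zero[simp]: "toric_hom A 0 = 0"
  unfolding toric_hom_def by simp

lemma th_add: "toric_hom A (p + q) = toric_hom A p + toric_hom A q"
proof -
  let ?S = "Poly_Mapping.keys p \<union> Poly_Mapping.keys q"
  have f: "finite ?S" by simp
  have "toric_hom A (p + q) = (\<Sum>\<alpha>\<in>?S. Poly_Mapping.single 0 (Poly_Mapping.lookup (p+q) \<alpha>) * MA A \<alpha>)"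
    by (rule th_S[OF f]) (simp add: keys_add)
  also have "\<dots> = (\<Sum>\<alpha>\<in>?S. Poly_Mapping.single 0 (Poly_Mapping.lookup p \<alpha>) * MA A \<alpha>)
       + (\<Sum>\<alpha>\<in>?S. Poly_Mapping.single 0 (Poly_Mapping.lookup q \<alpha>) * MA A \<alpha>)"
    by (simp add: lookup_add single_add distrib_right sum.distrib)
  also have "\<dots> = toric_hom A p + toric_hom A q"
    by (subst (1 2) th_S[OF f, symmetric]) auto
  finally show ?thesis .
qed

lemma th_uminus: "toric_hom A (- p) = - toric_hom A p"
  by (metis add_eq_0_iff th_add th_zero)

lemma th_diff: "toric_hom A (p - q) = toric_hom A p - toric_hom A q"
  by (metis diff_conv_add_uminus th_add th_uminus)

lemma th_sum: "toric_hom A (\<Sum>x\<in>F. f x) = (\<Sum>x\<in>F. toric_hom A (f x))"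
  by (induction F rule: infinite_finite_induct) (simp_all add: th_add)

lemma th_single: "toric_hom A (Poly_Mapping.single \<alpha> c) = Poly_Mapping.single 0 c * MA A \<alpha>"
  by (subst th_S[of "{\<alpha>}"]) auto

lemma MA_add: "MA A (\<alpha> + \<beta>) = MA A \<alpha> * MA A \<beta>"
  unfolding MA_def by (simp add: lookup_add power_add prod.distrib)

lemma th_mult: "toric_hom A (p * q) = toric_hom A p * toric_hom A q"
proof -
  have "p * q = (\<Sum>\<alpha>\<in>Poly_Mapping.keys p. \<Sum>\<beta>\<in>Poly_Mapping.keys q.
      Poly_Mapping.single \<alpha> (Poly_Mapping.lookup p \<alpha>) * Poly_Mapping.single \<beta> (Poly_Mapping.lookup q \<beta>))"
    by (subst (1) pm_expand, subst (2) pm_expand) (simp add: sum_product)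
  then have "toric_hom A (p * q) = (\<Sum>\<alpha>\<in>Poly_Mapping.keys p. \<Sum>\<beta>\<in>Poly_Mapping.keys q.
      (Poly_Mapping.single 0 (Poly_Mapping.lookup p \<alpha>) * MA A \<alpha>) * (Poly_Mapping.single 0 (Poly_Mapping.lookup q \<beta>) * MA A \<beta>))"
    by (simp add: th_sum mult_single th_single MA_add mult_ac)
  also have "\<dots> = toric_hom A p * toric_hom A q"
    by (simp add: toric_hom_def MA_def sum_product)
  finally show ?thesis .
qed

lemma th_one: "toric_hom A (1 :: ('n::finite, 'k::comm_ring_1) mpoly) = 1"
proof -
  have "(1 :: ('n, 'k) mpoly) = Poly_Mapping.single 0 1" by simp
  then show ?thesis using th_single[of A 0 "1::'k"] by (simp add: MA_def)
qed

lemma th_power: "toric_hom A (p ^ k) = toric_hom A p ^ k"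
  by (induction k) (simp_all add: th_one th_mult)

lemma th_prod: "toric_hom A (\<Prod>x\<in>F. f x) = (\<Prod>x\<in>F. toric_hom A (f x))"
  by (induction F rule: infinite_finite_induct) (simp_all add: th_one th_mult)

definition Ev :: "('n::finite \<Rightarrow> (nat \<Rightarrow>\<^sub>0 int)) \<Rightarrow> ('n \<Rightarrow> nat) \<Rightarrow> (nat \<Rightarrow>\<^sub>0 int)" where
  "Ev A e = (\<Sum>i\<in>UNIV. \<Sum>j<e i. A i)"

lemma lookup_Ev: "Poly_Mapping.lookup (Ev A e) x = (\<Sum>i\<in>UNIV. int (e i) * Poly_Mapping.lookup (A i) x)"
  unfolding Ev_def lookup_sum by simp

lemma th_var: "toric_hom A (var i :: ('n::finite, 'k::comm_ring_1) mpoly) = lmono (A i)"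
proof -
  have "MA A (Poly_Mapping.single i 1) = (\<Prod>j\<in>UNIV. if j = i then (lmono (A j) :: _ \<Rightarrow>\<^sub>0 'k) else 1)"
    unfolding MA_def by (rule prod.cong) (auto simp: lookup_single when_def)
  also have "\<dots> = lmono (A i)"
    by (subst prod.delta) auto
  finally show ?thesis unfolding var_def th_single by simp
qed

lemma th_monoF: "toric_hom A (monoF e :: ('n::finite, 'k::comm_ring_1) mpoly) = lmono (Ev A e)"
  unfolding monoF_def th_prod th_power th_var lmono_def single_pow1 Ev_def
  by (rule prod_single1) simp

lemma Ev_eq_iff: "Ev A e = Ev A f \<longleftrightarrow> (\<lambda>i. int (e i) - int (f i)) \<in> kerZ A"
proof -
  have "Ev A e = Ev A f \<longleftrightarrow> (\<forall>x. Poly_Mapping.lookup (Ev A e) x = Poly_Mapping.lookup (Ev A f) x)"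
    by (metis poly_mapping_eqI)
  also have "\<dots> \<longleftrightarrow> (\<forall>x. (\<Sum>i\<in>UNIV. (int (e i) - int (f i)) * Poly_Mapping.lookup (A i) x) = 0)"
    by (simp add: lookup_Ev left_diff_distrib sum_subtractf)
  finally show ?thesis unfolding kerZ_def by simp
qed

lemma binomial_monoF: "binomial u = monoF (\<lambda>i. nat (u i)) - monoF (\<lambda>i. nat (- u i))"
  unfolding binomial_def monoF_def ..

lemma th_binomial: "toric_hom A (binomial u :: ('n::finite, 'k::comm_ring_1) mpoly) = lmono (Ev A (\<lambda>i. nat (u i))) - lmono (Ev A (\<lambda>i. nat (- u i)))"
  unfolding binomial_monoF th_diff th_monoF ..

lemma lmono_diff_0: "(lmono a - lmono b :: _ \<Rightarrow>\<^sub>0 'k::comm_ring_1) = 0 \<longleftrightarrow> a = b"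
  by (simp add: lmono_def single_eq_single1)

lemma binomial_in_toric: "(binomial u :: ('n::finite, 'k::comm_ring_1) mpoly) \<in> toric_ideal A \<longleftrightarrow> u \<in> kerZ A"
proof -
  have "(binomial u :: ('n, 'k) mpoly) \<in> toric_ideal A \<longleftrightarrow> Ev A (\<lambda>i. nat (u i)) = Ev A (\<lambda>i. nat (- u i))"
    unfolding toric_ideal_def mem_Collect_eq th_binomial lmono_diff_0 ..
  also have "\<dots> \<longleftrightarrow> u \<in> kerZ A"
  proof -
    have "(\<lambda>i. int (nat (u i)) - int (nat (- u i))) = u" by (rule ext) simp
    then show ?thesis unfolding Ev_eq_iff by simp
  qed
  finally show ?thesis .
qed



interpretation rmod: module "(*) :: 'a::comm_ring_1 \<Rightarrow> 'a \<Rightarrow> 'a"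
  by unfold_locales (simp_all add: algebra_simps)

lemma ideal_gen_span: "ideal_gen S = rmod.span S"
  unfolding ideal_gen_def rmod.span_explicit by auto

lemma ideal_gen_add: "p \<in> ideal_gen S \<Longrightarrow> q \<in> ideal_gen S \<Longrightarrow> p + q \<in> ideal_gen S"
  unfolding ideal_gen_span by (rule rmod.span_add)

lemma ideal_gen_mult: "p \<in> ideal_gen S \<Longrightarrow> c * p \<in> ideal_gen S"
  unfolding ideal_gen_span by (rule rmod.span_scale)

lemma ideal_gen_mult2: "p \<in> ideal_gen S \<Longrightarrow> p * c \<in> ideal_gen S"
  using ideal_gen_mult by (metis mult.commute)

lemma ideal_gen_base: "p \<in> S \<Longrightarrow> p \<in> ideal_gen S"
  unfolding ideal_gen_span by (rule rmod.span_base)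

lemma ideal_gen_0: "0 \<in> ideal_gen S"
  unfolding ideal_gen_span by (rule rmod.span_zero)

lemma ideal_gen_sum: "(\<And>x. x \<in> F \<Longrightarrow> f x \<in> ideal_gen S) \<Longrightarrow> sum f F \<in> ideal_gen S"
  unfolding ideal_gen_span by (rule rmod.span_sum)

lemma ideal_gen_diff: "p \<in> ideal_gen S \<Longrightarrow> q \<in> ideal_gen S \<Longrightarrow> p - q \<in> ideal_gen S"
  unfolding ideal_gen_span by (rule rmod.span_diff)

lemma ideal_gen_mono: "S \<subseteq> T \<Longrightarrow> ideal_gen S \<subseteq> ideal_gen T"
  unfolding ideal_gen_span by (rule rmod.span_mono)

lemma ideal_gen_subset:
  assumes "S \<subseteq> ideal_gen T" shows "ideal_gen S \<subseteq> ideal_gen T"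
  using assms unfolding ideal_gen_span by (metis rmod.span_minimal rmod.subspace_span)

lemma ideal_gen_closed:
  assumes "0 \<in> I" "\<And>p q. p \<in> I \<Longrightarrow> q \<in> I \<Longrightarrow> p + q \<in> I" "\<And>c p. p \<in> I \<Longrightarrow> c * p \<in> I" "S \<subseteq> I"
  shows "ideal_gen S \<subseteq> I"
  unfolding ideal_gen_span
  by (rule rmod.span_minimal) (use assms in \<open>auto simp: rmod.subspace_def\<close>)

lemma radical_sub: "I \<subseteq> radical I"
  unfolding radical_def by (auto intro: exI[of _ 1])

lemma radical_mono: "I \<subseteq> J \<Longrightarrow> radical I \<subseteq> radical J"
  unfolding radical_def by auto

lemma radical_radical: "radical (radical I) = radical I"
proof
  show "radical (radical I) \<subseteq> radical I"
  proof
    fix p assume "p \<in> radical (radical I)"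
    then obtain k l where "(p ^ k) ^ l \<in> I" unfolding radical_def by auto
    then have "p ^ (k * l) \<in> I" by (simp add: power_mult)
    then show "p \<in> radical I" unfolding radical_def by auto
  qed
qed (rule radical_sub)

lemma radical_ideal_add:
  assumes "p \<in> radical (ideal_gen S)" "q \<in> radical (ideal_gen S)"
  shows "p + q \<in> radical (ideal_gen S)"
proof -
  obtain m n where m: "p ^ m \<in> ideal_gen S" and n: "q ^ n \<in> ideal_gen S"
    using assms unfolding radical_def by auto
  have "(p + q) ^ (m + n) = (\<Sum>k\<le>m + n. of_nat ((m + n) choose k) * p ^ k * q ^ (m + n - k))"
    by (rule binomial_ring)
  also have "\<dots> \<in> ideal_gen S"
  proof (rule ideal_gen_sum)
    fix k assume "k \<in> {..m + n}"
    show "of_nat ((m + n) choose k) * p ^ k * q ^ (m + n - k) \<in> ideal_gen S"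
    proof (cases "m \<le> k")
      case True
      then have e: "p ^ k = p ^ m * p ^ (k - m)" by (metis le_add_diff_inverse power_add)
      have "of_nat ((m + n) choose k) * p ^ k * q ^ (m + n - k) = (of_nat ((m + n) choose k) * p ^ (k - m) * q ^ (m + n - k)) * p ^ m"
        by (simp only: e ac_simps)
      then show ?thesis using m ideal_gen_mult by metis
    next
      case False
      then have "n \<le> m + n - k" by simp
      then have e: "q ^ (m + n - k) = q ^ n * q ^ (m + n - k - n)" by (metis le_add_diff_inverse power_add)
      have "of_nat ((m + n) choose k) * p ^ k * q ^ (m + n - k) = (of_nat ((m + n) choose k) * p ^ k * q ^ (m + n - k - n)) * q ^ n"
        by (simp only: e ac_simps)
      then show ?thesis using n ideal_gen_mult by metis
    qed
  qed
  finally show ?thesis unfolding radical_def by auto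
qed

lemma radical_ideal_mult:
  assumes "p \<in> radical (ideal_gen S)"
  shows "c * p \<in> radical (ideal_gen S)"
proof -
  obtain m where m: "p ^ m \<in> ideal_gen S" using assms unfolding radical_def by auto
  have "(c * p) ^ m = c ^ m * p ^ m" by (simp add: power_mult_distrib)
  then show ?thesis using m ideal_gen_mult unfolding radical_def by (metis mem_Collect_eq)
qed

lemma radical_gen_subset:
  assumes "S \<subseteq> radical (ideal_gen T)"
  shows "radical (ideal_gen S) \<subseteq> radical (ideal_gen T)"
proof -
  have "ideal_gen S \<subseteq> radical (ideal_gen T)"
    by (rule ideal_gen_closed) (use assms in \<open>auto intro: radical_ideal_add radical_ideal_mult
          simp: radical_sub[THEN subsetD] ideal_gen_0\<close>)
  then show ?thesis using radical_mono radical_radical by metis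
qed

lemma toric_add: "p \<in> toric_ideal A \<Longrightarrow> q \<in> toric_ideal A \<Longrightarrow> p + q \<in> toric_ideal A"
  unfolding toric_ideal_def by (simp add: th_add)

lemma toric_mult: "p \<in> toric_ideal A \<Longrightarrow> c * p \<in> toric_ideal A"
  unfolding toric_ideal_def by (simp add: th_mult)

lemma toric_0: "0 \<in> toric_ideal A"
  unfolding toric_ideal_def by simp

lemma ideal_gen_toric: "S \<subseteq> toric_ideal A \<Longrightarrow> ideal_gen S \<subseteq> toric_ideal A"
  by (rule ideal_gen_closed) (auto intro: toric_add toric_mult toric_0)

lemma radical_toric: "radical (toric_ideal A :: ('n::finite, 'k::field) mpoly set) = toric_ideal A"
  unfolding radical_def toric_ideal_def by (auto simp: th_power)

lemma monoF_diff_in: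
  assumes "Ev A \<alpha> = Ev A \<beta>"
  shows "(monoF \<alpha> - monoF \<beta> :: ('n::finite, 'k::comm_ring_1) mpoly) \<in> ideal_gen (binomial ` kerZ A)"
proof -
  define u where "u = (\<lambda>i. int (\<alpha> i) - int (\<beta> i))"
  define \<gamma> where "\<gamma> = (\<lambda>i. min (\<alpha> i) (\<beta> i))"
  have u: "u \<in> kerZ A" using assms unfolding Ev_eq_iff u_def .
  have a: "\<alpha> = (\<lambda>i. nat (u i) + \<gamma> i)" and b: "\<beta> = (\<lambda>i. nat (- u i) + \<gamma> i)"
    unfolding u_def \<gamma>_def by (auto simp: fun_eq_iff)
  have "(monoF \<alpha> - monoF \<beta> :: ('n, 'k) mpoly) = binomial u * monoF \<gamma>"
    by (subst a, subst b) (simp add: monoF_add binomial_monoF algebra_simps)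
  moreover have "(binomial u :: ('n, 'k) mpoly) \<in> ideal_gen (binomial ` kerZ A)"
    by (rule ideal_gen_base) (use u in auto)
  ultimately show ?thesis by (metis ideal_gen_mult2)
qed

lemma MA_eq: "(MA (A :: 'n::finite \<Rightarrow> _) \<alpha> :: _ \<Rightarrow>\<^sub>0 'k::comm_ring_1) = lmono (Ev A (Poly_Mapping.lookup \<alpha>))"
proof -
  have "(MA A \<alpha> :: _ \<Rightarrow>\<^sub>0 'k) = toric_hom A (Poly_Mapping.single \<alpha> 1 :: ('n, 'k) mpoly)"
    by (simp add: th_single)
  also have "\<dots> = lmono (Ev A (Poly_Mapping.lookup \<alpha>))"
    by (simp add: monoF_lookup[symmetric] th_monoF)
  finally show ?thesis .
qed

lemma lookup_th: "Poly_Mapping.lookup (toric_hom A (p :: ('n::finite, 'k::comm_ring_1) mpoly)) d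
   = (\<Sum>\<alpha>\<in>Poly_Mapping.keys p. Poly_Mapping.lookup p \<alpha> when Ev A (Poly_Mapping.lookup \<alpha>) = d)"
  unfolding th_S[OF finite_keys subset_refl] MA_eq lmono_def
  by (simp add: mult_single lookup_sum lookup_single when_def)

lemma toric_sub_gen: "toric_ideal A \<subseteq> (ideal_gen (binomial ` kerZ A) :: ('n::finite, 'k::comm_ring_1) mpoly set)"
proof
  fix p :: "('n, 'k) mpoly"
  assume "p \<in> toric_ideal A"
  then have hp: "toric_hom A p = 0" unfolding toric_ideal_def by simp
  let ?S = "Poly_Mapping.keys p"
  let ?E = "\<lambda>\<alpha>. Ev A (Poly_Mapping.lookup \<alpha>)"
  define R where "R \<alpha> = (SOME \<beta>. \<beta> \<in> ?S \<and> ?E \<beta> = ?E \<alpha>)" for \<alpha>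
  have R: "R \<alpha> \<in> ?S \<and> ?E (R \<alpha>) = ?E \<alpha>" if "\<alpha> \<in> ?S" for \<alpha>
    unfolding R_def by (rule someI[of _ \<alpha>]) (use that in auto)
  have Req: "R \<alpha> = R \<beta>" if "?E \<alpha> = ?E \<beta>" for \<alpha> \<beta>
    unfolding R_def using that by simp
  have "p = (\<Sum>\<alpha>\<in>?S. Poly_Mapping.single 0 (Poly_Mapping.lookup p \<alpha>) * monoF (Poly_Mapping.lookup \<alpha>))"
    by (subst pm_expand) (simp add: monoF_lookup mult_single)
  also have "\<dots> = (\<Sum>\<alpha>\<in>?S. Poly_Mapping.single 0 (Poly_Mapping.lookup p \<alpha>) *
        (monoF (Poly_Mapping.lookup \<alpha>) - monoF (Poly_Mapping.lookup (R \<alpha>))))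
      + (\<Sum>\<alpha>\<in>?S. Poly_Mapping.single (R \<alpha>) (Poly_Mapping.lookup p \<alpha>))"
    by (simp add: monoF_lookup mult_single algebra_simps sum.distrib[symmetric])
  also have "(\<Sum>\<alpha>\<in>?S. Poly_Mapping.single (R \<alpha>) (Poly_Mapping.lookup p \<alpha>)) = 0"
  proof (rule poly_mapping_eqI)
    fix \<beta>
    have "Poly_Mapping.lookup (\<Sum>\<alpha>\<in>?S. Poly_Mapping.single (R \<alpha>) (Poly_Mapping.lookup p \<alpha>)) \<beta>
        = (\<Sum>\<alpha>\<in>?S. Poly_Mapping.lookup p \<alpha> when R \<alpha> = \<beta>)"
      by (simp add: lookup_sum lookup_single when_def eq_commute)
    also have "\<dots> = 0"
    proof (cases "\<exists>\<alpha>0\<in>?S. R \<alpha>0 = \<beta>")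
      case True
      then obtain \<alpha>0 where a0: "\<alpha>0 \<in> ?S" "R \<alpha>0 = \<beta>" by auto
      have "(\<Sum>\<alpha>\<in>?S. Poly_Mapping.lookup p \<alpha> when R \<alpha> = \<beta>)
          = (\<Sum>\<alpha>\<in>?S. Poly_Mapping.lookup p \<alpha> when ?E \<alpha> = ?E \<alpha>0)"
      proof (rule sum.cong)
        fix \<alpha> assume "\<alpha> \<in> ?S"
        have "R \<alpha> = \<beta> \<longleftrightarrow> ?E \<alpha> = ?E \<alpha>0"
          using R[OF \<open>\<alpha> \<in> ?S\<close>] R[OF a0(1)] a0(2) Req by metis
        then show "(Poly_Mapping.lookup p \<alpha> when R \<alpha> = \<beta>) = (Poly_Mapping.lookup p \<alpha> when ?E \<alpha> = ?E \<alpha>0)"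
          by simp
      qed simp
      also have "\<dots> = Poly_Mapping.lookup (toric_hom A p) (?E \<alpha>0)"
        by (simp add: lookup_th)
      finally show ?thesis using hp by simp
    next
      case False
      then show ?thesis by (auto intro!: sum.neutral simp: when_def)
    qed
    finally show "Poly_Mapping.lookup (\<Sum>\<alpha>\<in>?S. Poly_Mapping.single (R \<alpha>) (Poly_Mapping.lookup p \<alpha>)) \<beta>
        = Poly_Mapping.lookup 0 \<beta>" by simp
  qed
  finally have "p = (\<Sum>\<alpha>\<in>?S. Poly_Mapping.single 0 (Poly_Mapping.lookup p \<alpha>) *
        (monoF (Poly_Mapping.lookup \<alpha>) - monoF (Poly_Mapping.lookup (R \<alpha>))))" by simp
  also have "\<dots> \<in> ideal_gen (binomial ` kerZ A)"
  proof (rule ideal_gen_sum)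
    fix \<alpha> assume "\<alpha> \<in> ?S"
    then show "Poly_Mapping.single 0 (Poly_Mapping.lookup p \<alpha>) *
        (monoF (Poly_Mapping.lookup \<alpha>) - monoF (Poly_Mapping.lookup (R \<alpha>))) \<in> ideal_gen (binomial ` kerZ A)"
      using R by (intro ideal_gen_mult monoF_diff_in) auto
  qed
  finally show "p \<in> ideal_gen (binomial ` kerZ A)" .
qed

lemma toric_eq_gen: "toric_ideal A = (ideal_gen (binomial ` kerZ A) :: ('n::finite, 'k::comm_ring_1) mpoly set)"
proof
  show "ideal_gen (binomial ` kerZ A) \<subseteq> toric_ideal A"
    by (rule ideal_gen_toric) (auto simp: binomial_in_toric)
qed (rule toric_sub_gen)



lemma dickson_gen:
  fixes X :: "('a \<Rightarrow> nat) set"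
  assumes "finite I"
  shows "\<exists>M\<subseteq>X. finite M \<and> (\<forall>x\<in>X. \<exists>m\<in>M. \<forall>i\<in>I. m i \<le> x i)"
  using assms
proof (induction I arbitrary: X rule: finite_induct)
  case empty
  show ?case
    by (rule exI[of _ "if X = {} then {} else {SOME x. x \<in> X}"]) (auto, metis someI)
next
  case (insert j I)
  from insert.IH have "\<forall>X :: ('a \<Rightarrow> nat) set. \<exists>M. M \<subseteq> X \<and> finite M \<and> (\<forall>x\<in>X. \<exists>m\<in>M. \<forall>i\<in>I. m i \<le> x i)" by blast
  then obtain f where f: "\<And>X :: ('a \<Rightarrow> nat) set. f X \<subseteq> X \<and> finite (f X) \<and> (\<forall>x\<in>X. \<exists>m\<in>f X. \<forall>i\<in>I. m i \<le> x i)"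
    by metis
  define M0 where "M0 = f X"
  define sl where "sl k = {x\<in>X. x j = k}" for k
  define M where "M = M0 \<union> (\<Union>m\<in>M0. \<Union>k\<in>{..<m j}. f (sl k))"
  have "M \<subseteq> X" unfolding M_def M0_def using f[of X] f[of "sl _"] by (auto simp: sl_def)
  moreover have "finite M" unfolding M_def M0_def using f by auto
  moreover have "\<forall>x\<in>X. \<exists>m\<in>M. \<forall>i\<in>insert j I. m i \<le> x i"
  proof
    fix x assume x: "x \<in> X"
    obtain m where m: "m \<in> M0" "\<forall>i\<in>I. m i \<le> x i" using f[of X] x unfolding M0_def by blast
    show "\<exists>m\<in>M. \<forall>i\<in>insert j I. m i \<le> x i"
    proof (cases "m j \<le> x j")
      case True
      then show ?thesis using m unfolding M_def by auto
    next
      case False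
      have "x \<in> sl (x j)" using x unfolding sl_def by auto
      then obtain m' where m': "m' \<in> f (sl (x j))" "\<forall>i\<in>I. m' i \<le> x i" using f[of "sl (x j)"] by blast
      have "m' j = x j" using m'(1) f[of "sl (x j)"] unfolding sl_def by auto
      moreover have "m' \<in> M" unfolding M_def using m(1) m'(1) False by auto
      ultimately show ?thesis using m'(2) by (intro bexI[of _ m']) auto
    qed
  qed
  ultimately show ?case by blast
qed

lemma dickson:
  fixes X :: "('a::finite \<Rightarrow> nat) set"
  shows "\<exists>M\<subseteq>X. finite M \<and> (\<forall>x\<in>X. \<exists>m\<in>M. \<forall>i. m i \<le> x i)"
  using dickson_gen[of "UNIV :: 'a set" X] by auto

lemma dickson_pairs:
  fixes P :: "(('a::finite \<Rightarrow> nat) \<times> ('a \<Rightarrow> nat)) set"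
  shows "\<exists>M\<subseteq>P. finite M \<and> (\<forall>(a, b)\<in>P. \<exists>(a', b')\<in>M. (\<forall>i. a' i \<le> a i) \<and> (\<forall>i. b' i \<le> b i))"
proof -
  define enc :: "('a \<Rightarrow> nat) \<times> ('a \<Rightarrow> nat) \<Rightarrow> ('a + 'a \<Rightarrow> nat)" where "enc p = case_sum (fst p) (snd p)" for p
  define dec :: "('a + 'a \<Rightarrow> nat) \<Rightarrow> ('a \<Rightarrow> nat) \<times> ('a \<Rightarrow> nat)" where "dec f = (f \<circ> Inl, f \<circ> Inr)" for f
  have de: "dec (enc p) = p" for p unfolding enc_def dec_def by (cases p) auto
  obtain M where M: "M \<subseteq> enc ` P" "finite M" "\<forall>x\<in>enc ` P. \<exists>m\<in>M. \<forall>i. m i \<le> x i"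
    using dickson[of "enc ` P"] by blast
  have "dec ` M \<subseteq> P" using M(1) de by auto
  moreover have "finite (dec ` M)" using M(2) by simp
  moreover have "\<forall>(a, b)\<in>P. \<exists>(a', b')\<in>dec ` M. (\<forall>i. a' i \<le> a i) \<and> (\<forall>i. b' i \<le> b i)"
  proof (clarify)
    fix a b assume "(a, b) \<in> P"
    then obtain m where m: "m \<in> M" "\<forall>i. m i \<le> enc (a, b) i" using M(3) by blast
    have l: "m (Inl i) \<le> a i" for i
    proof -
      have "enc (a, b) (Inl i) = a i" unfolding enc_def by simp
      then show ?thesis using m(2) by metis
    qed
    have r: "m (Inr i) \<le> b i" for i
    proof -
      have "enc (a, b) (Inr i) = b i" unfolding enc_def by simp
      then show ?thesis using m(2) by metis
    qed
    have "dec m \<in> dec ` M" using m(1) by blast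
    then show "\<exists>(a', b')\<in>dec ` M. (\<forall>i. a' i \<le> a i) \<and> (\<forall>i. b' i \<le> b i)"
      using l r unfolding dec_def by (intro bexI[of _ "(m \<circ> Inl, m \<circ> Inr)"]) auto
  qed
  ultimately show ?thesis by blast
qed

lemma monoF_diff_eq:
  "(monoF \<alpha> - monoF \<beta> :: ('n::finite, 'k::comm_ring_1) mpoly)
     = binomial (\<lambda>i. int (\<alpha> i) - int (\<beta> i)) * monoF (\<lambda>i. min (\<alpha> i) (\<beta> i))"
proof -
  define u where "u = (\<lambda>i. int (\<alpha> i) - int (\<beta> i))"
  define \<gamma> where "\<gamma> = (\<lambda>i. min (\<alpha> i) (\<beta> i))"
  have a: "\<alpha> = (\<lambda>i. nat (u i) + \<gamma> i)" and b: "\<beta> = (\<lambda>i. nat (- u i) + \<gamma> i)"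
    unfolding u_def \<gamma>_def by (auto simp: fun_eq_iff)
  have "(monoF \<alpha> - monoF \<beta> :: ('n, 'k) mpoly) = binomial u * monoF \<gamma>"
    by (subst a, subst b) (simp add: monoF_add binomial_monoF algebra_simps)
  then show ?thesis unfolding u_def \<gamma>_def .
qed

lemma kerZ_diff: "u \<in> kerZ A \<Longrightarrow> v \<in> kerZ A \<Longrightarrow> (\<lambda>i. u i - v i) \<in> kerZ A"
  unfolding kerZ_def by (simp add: left_diff_distrib sum_subtractf)

lemma Ev_zero: "Ev A (\<lambda>i. 0) = 0"
  unfolding Ev_def by simp

lemma toric_fin:
  assumes pt: "pointed A"
  shows "\<exists>K. finite K \<and> K \<subseteq> kerZ A \<and> toric_ideal A \<subseteq> (ideal_gen (binomial ` K) :: ('n::finite, 'k::comm_ring_1) mpoly set)"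
proof -
  define P :: "(('n \<Rightarrow> nat) \<times> ('n \<Rightarrow> nat)) set" where "P = {(\<alpha>, \<beta>). Ev A \<alpha> = Ev A \<beta> \<and> \<alpha> \<noteq> \<beta>}"
  obtain M where M: "M \<subseteq> P" "finite M" "\<forall>(a, b)\<in>P. \<exists>(a', b')\<in>M. (\<forall>i. a' i \<le> a i) \<and> (\<forall>i. b' i \<le> b i)"
    using dickson_pairs[of P] by blast
  define K where "K = (\<lambda>(a, b). \<lambda>i. int (a i) - int (b i)) ` M"
  have Kfin: "finite K" unfolding K_def using M(2) by simp
  have Kker: "K \<subseteq> kerZ A" unfolding K_def using M(1) by (auto simp: P_def Ev_eq_iff)
  define J where "J = (ideal_gen (binomial ` K) :: ('n, 'k) mpoly set)"
  have Mgen: "(monoF a - monoF b :: ('n, 'k) mpoly) \<in> J" if "(a, b) \<in> M" for a b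
  proof -
    have "binomial (\<lambda>i. int (a i) - int (b i)) \<in> (binomial ` K :: ('n, 'k) mpoly set)"
      unfolding K_def using that by force
    then show ?thesis unfolding J_def monoF_diff_eq by (metis ideal_gen_base ideal_gen_mult2)
  qed
  have main: "\<forall>\<alpha> \<beta>. (\<Sum>i\<in>UNIV. \<alpha> i + \<beta> i) = N \<longrightarrow> Ev A \<alpha> = Ev A \<beta> \<longrightarrow> (monoF \<alpha> - monoF \<beta> :: ('n, 'k) mpoly) \<in> J" for N
  proof (induction N rule: less_induct)
    case (less N)
    show ?case
    proof (intro allI impI)
      fix \<alpha> \<beta> :: "'n \<Rightarrow> nat"
      assume N: "(\<Sum>i\<in>UNIV. \<alpha> i + \<beta> i) = N" and E: "Ev A \<alpha> = Ev A \<beta>"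
      show "(monoF \<alpha> - monoF \<beta> :: ('n, 'k) mpoly) \<in> J"
      proof (cases "\<alpha> = \<beta>")
        case True
        then show ?thesis unfolding J_def by (simp add: ideal_gen_0)
      next
        case False
        then have "(\<alpha>, \<beta>) \<in> P" using E unfolding P_def by auto
        then obtain a' b' where ab: "(a', b') \<in> M" "\<forall>i. a' i \<le> \<alpha> i" "\<forall>i. b' i \<le> \<beta> i"
          using M(3) by blast
        have abP: "Ev A a' = Ev A b'" "a' \<noteq> b'" using ab(1) M(1) unfolding P_def by auto
        have "b' \<noteq> (\<lambda>i. 0)"
        proof
          assume b0: "b' = (\<lambda>i. 0)"
          have "(\<lambda>i. int (a' i) - int (b' i)) \<in> kerZ A" using abP(1) Ev_eq_iff by blast
          then have "\<forall>i. int (a' i) - int (b' i) = 0" using pt b0 unfolding pointed_def by auto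
          then show False using abP(2) b0 by auto
        qed
        then obtain i0 where i0: "b' i0 > 0" by auto
        define a2 where "a2 = (\<lambda>i. \<alpha> i - a' i)"
        define b2 where "b2 = (\<lambda>i. \<beta> i - b' i)"
        have "(\<lambda>i. (int (\<alpha> i) - int (\<beta> i)) - (int (a' i) - int (b' i))) \<in> kerZ A"
          by (rule kerZ_diff) (use E abP(1) in \<open>simp_all add: Ev_eq_iff[symmetric]\<close>)
        moreover have "(\<lambda>i. (int (\<alpha> i) - int (\<beta> i)) - (int (a' i) - int (b' i))) = (\<lambda>i. int (a2 i) - int (b2 i))"
          unfolding a2_def b2_def using ab(2,3) by (auto simp: fun_eq_iff of_nat_diff)
        ultimately have E2: "Ev A a2 = Ev A b2" by (simp add: Ev_eq_iff)
        have "(\<Sum>i\<in>UNIV. a2 i + b2 i) < (\<Sum>i\<in>UNIV. \<alpha> i + \<beta> i)"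
        proof (rule sum_strict_mono_ex1)
          have "a' i0 \<le> \<alpha> i0" "b' i0 \<le> \<beta> i0" using ab(2,3) by auto
          then show "\<exists>i\<in>UNIV. a2 i + b2 i < \<alpha> i + \<beta> i"
            using i0 unfolding a2_def b2_def by (intro bexI[of _ i0]) auto
        qed (auto simp: a2_def b2_def)
        then have IH: "(monoF a2 - monoF b2 :: ('n, 'k) mpoly) \<in> J"
          using less.IH N E2 by blast
        have sa: "\<alpha> = (\<lambda>i. a2 i + a' i)" and sb: "\<beta> = (\<lambda>i. b2 i + b' i)"
          unfolding a2_def b2_def using ab(2,3) by (auto simp: fun_eq_iff)
        have "(monoF \<alpha> - monoF \<beta> :: ('n, 'k) mpoly)
            = monoF a2 * (monoF a' - monoF b') + monoF b' * (monoF a2 - monoF b2)"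
          by (subst sa, subst sb) (simp add: monoF_add algebra_simps)
        also have "\<dots> \<in> J" unfolding J_def
          by (intro ideal_gen_add ideal_gen_mult) (use IH Mgen[OF ab(1)] in \<open>simp_all add: J_def\<close>)
        finally show ?thesis .
      qed
    qed
  qed
  have "toric_ideal A \<subseteq> J"
  proof -
    have "binomial ` kerZ A \<subseteq> J"
    proof
      fix p assume "p \<in> (binomial ` kerZ A :: ('n, 'k) mpoly set)"
      then obtain u where u: "u \<in> kerZ A" "p = binomial u" by auto
      have "(\<lambda>i. int (nat (u i)) - int (nat (- u i))) = u" by (rule ext) simp
      then have "Ev A (\<lambda>i. nat (u i)) = Ev A (\<lambda>i. nat (- u i))" using u(1) by (simp add: Ev_eq_iff)
      then show "p \<in> J" using main u(2) unfolding binomial_monoF by blast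
    qed
    then show ?thesis using toric_sub_gen[of A] ideal_gen_subset unfolding J_def by blast
  qed
  then show ?thesis using Kfin Kker unfolding J_def by blast
qed





lemma sum_fun_apply: "(\<Sum>i\<in>F. f i) x = (\<Sum>i\<in>F. f i x)"
  by (induction F rule: infinite_finite_induct) auto

definition qscale :: "rat \<Rightarrow> ('n \<Rightarrow> rat) \<Rightarrow> ('n \<Rightarrow> rat)" where
  "qscale c v = (\<lambda>i. c * v i)"

lemma qscale_apply: "qscale c v i = c * v i"
  unfolding qscale_def ..

interpretation qv: vector_space qscale
proof (unfold_locales)
  fix a b :: rat and x y :: "'n \<Rightarrow> rat"
  show "qscale a (x + y) = qscale a x + qscale a y"
    by (rule ext) (simp only: qscale_apply plus_fun_apply distrib_left)
  show "qscale (a + b) x = qscale a x + qscale b x"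
    by (rule ext) (simp only: qscale_apply plus_fun_apply distrib_right)
  show "qscale a (qscale b x) = qscale (a * b) x"
    by (rule ext) (simp only: qscale_apply mult.assoc)
  show "qscale 1 x = x" by (rule ext) (simp only: qscale_apply mult_1_left)
qed

interpretation qr: vector_space "(*) :: rat \<Rightarrow> rat \<Rightarrow> rat"
  by unfold_locales (simp_all only: distrib_left distrib_right mult.assoc mult_1_left)

interpretation qvp: vector_space_pair "qscale :: rat \<Rightarrow> ('n \<Rightarrow> rat) \<Rightarrow> _" "(*) :: rat \<Rightarrow> rat \<Rightarrow> rat"
  by unfold_locales

lemma qspan_span: "qspan C = qv.span ((\<lambda>u i. of_int (u i)) ` C)"
proof -
  let ?g = "\<lambda>(u::'a \<Rightarrow> int) i. (of_int (u i) :: rat)"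
  have inj: "inj ?g" by (auto simp: inj_def fun_eq_iff)
  show ?thesis
  proof
    show "qspan C \<subseteq> qv.span (?g ` C)"
    proof
      fix v assume "v \<in> qspan C"
      then obtain F c where F: "finite F" "F \<subseteq> C" "v = (\<lambda>i. \<Sum>u\<in>F. c u * of_int (u i))"
        unfolding qspan_def by auto
      have "v = (\<Sum>u\<in>F. qscale (c u) (?g u))" unfolding F(3) by (simp add: sum_fun_apply fun_eq_iff qscale_def)
      also have "\<dots> \<in> qv.span (?g ` C)"
      proof (rule qv.span_sum)
        fix u assume "u \<in> F"
        then have "?g u \<in> qv.span (?g ` C)" using F(2) by (intro qv.span_base) auto
        then show "qscale (c u) (?g u) \<in> qv.span (?g ` C)" by (rule qv.span_scale)
      qed
      finally show "v \<in> qv.span (?g ` C)" .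
    qed
  next
    show "qv.span (?g ` C) \<subseteq> qspan C"
    proof
      fix v assume "v \<in> qv.span (?g ` C)"
      then obtain t r where t: "finite t" "t \<subseteq> ?g ` C" "v = (\<Sum>a\<in>t. qscale (r a) a)"
        unfolding qv.span_explicit by auto
      obtain F where F: "F \<subseteq> C" "t = ?g ` F" using t(2) by (meson subset_image_iff)
      have fF: "finite F" using t(1) F(2) inj by (metis finite_imageD inj_on_subset subset_UNIV)
      have "v = (\<Sum>u\<in>F. qscale (r (?g u)) (?g u))"
        unfolding t(3) F(2) by (rule sum.reindex[unfolded comp_def], rule inj_on_subset[OF inj subset_UNIV])
      also have "\<dots> = (\<lambda>i. \<Sum>u\<in>F. (r \<circ> ?g) u * of_int (u i))" by (simp add: sum_fun_apply fun_eq_iff qscale_def)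
      finally show "v \<in> qspan C" unfolding qspan_def using F(1) fF by blast
    qed
  qed
qed

lemma rat_common_denom:
  fixes d :: "'a \<Rightarrow> rat"
  assumes "finite F"
  shows "\<exists>N::int. N > 0 \<and> (\<forall>x\<in>F. of_int N * d x \<in> \<int>)"
  using assms
proof (induction F rule: finite_induct)
  case empty
  then show ?case by (auto intro: exI[of _ 1])
next
  case (insert y F)
  then obtain N where N: "N > 0" "\<forall>x\<in>F. of_int N * d x \<in> \<int>" by auto
  obtain p q where pq: "quotient_of (d y) = (p, q)" by (cases "quotient_of (d y)")
  have q: "q > 0" using quotient_of_denom_pos[OF pq] .
  have dy: "d y = of_int p / of_int q" using quotient_of_div[OF pq] .
  have "of_int (N * q) * d y = of_int (N * p)" using q by (simp add: dy)
  then have y: "of_int (N * q) * d y \<in> \<int>" by (metis Ints_of_int)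
  have Fx: "of_int (N * q) * d x \<in> \<int>" if "x \<in> F" for x
  proof -
    have "of_int (N * q) * d x = of_int q * (of_int N * d x)" by simp
    then show ?thesis using N(2) that by (metis Ints_mult Ints_of_int)
  qed
  have "\<forall>x\<in>insert y F. of_int (N * q) * d x \<in> \<int>" using y Fx by blast
  moreover have "N * q > 0" using N(1) q by simp
  ultimately show ?case by blast
qed

lemma kerQ_of_int: "(\<lambda>i. of_int (u i) :: rat) \<in> kerQ A \<longleftrightarrow> u \<in> kerZ A"
proof -
  have "(\<Sum>i\<in>UNIV. (of_int (u i) :: rat) * of_int (Poly_Mapping.lookup (A i) j))
      = of_int (\<Sum>i\<in>UNIV. u i * Poly_Mapping.lookup (A i) j)" for j
    by simp
  then show ?thesis unfolding kerQ_def kerZ_def by (simp del: of_int_sum of_int_mult)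
qed

lemma qspan_sub_kerQ:
  assumes "C \<subseteq> kerZ A" shows "qspan C \<subseteq> kerQ A"
proof
  fix v assume "v \<in> qspan C"
  then obtain F c where F: "finite F" "F \<subseteq> C" "v = (\<lambda>i. \<Sum>u\<in>F. c u * of_int (u i))"
    unfolding qspan_def by auto
  have z: "(\<Sum>i\<in>UNIV. (of_int (u i) :: rat) * of_int (Poly_Mapping.lookup (A i) j)) = 0" if "u \<in> F" for u j
    using assms F(2) that kerQ_of_int[of u A] unfolding kerQ_def by auto
  have "(\<Sum>i\<in>UNIV. v i * of_int (Poly_Mapping.lookup (A i) j)) = 0" for j
  proof -
    have "(\<Sum>i\<in>UNIV. v i * of_int (Poly_Mapping.lookup (A i) j))
        = (\<Sum>u\<in>F. c u * (\<Sum>i\<in>UNIV. of_int (u i) * of_int (Poly_Mapping.lookup (A i) j)))"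
      unfolding F(3) sum_distrib_right sum_distrib_left mult.assoc by (rule sum.swap)
    also have "\<dots> = 0" using z by simp
    finally show ?thesis .
  qed
  then show "v \<in> kerQ A" unfolding kerQ_def by simp
qed

lemma separate:
  fixes A :: "'n::finite \<Rightarrow> (nat \<Rightarrow>\<^sub>0 int)"
  assumes CK: "C \<subseteq> kerZ A" and ps: "qspan C \<subset> kerQ A"
  shows "\<exists>f :: 'n \<Rightarrow> int. (\<forall>u\<in>C. (\<Sum>i\<in>UNIV. u i * f i) = 0) \<and> (\<exists>w\<in>kerZ A. (\<Sum>i\<in>UNIV. w i * f i) \<noteq> 0)"
proof -
  let ?g = "\<lambda>(u::'n \<Rightarrow> int) i. (of_int (u i) :: rat)"
  let ?V = "?g ` C"
  obtain w where w: "w \<in> kerQ A" "w \<notin> qv.span ?V" using ps unfolding qspan_span by auto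
  obtain B where B: "B \<subseteq> ?V" "qv.independent B" "?V \<subseteq> qv.span B"
    using qv.maximal_independent_subset by blast
  have spB: "qv.span ?V = qv.span B" using B(1,3) qv.span_superset by (simp add: qv.span_eq) blast
  have wB: "w \<notin> qv.span B" using w(2) spB by simp
  then have wB': "w \<notin> B" using qv.span_base by blast
  have ind: "qv.independent (insert w B)" using B(2) wB by (simp add: qv.independent_insertI)
  obtain h where h: "Vector_Spaces.linear (qscale :: rat \<Rightarrow> ('n \<Rightarrow> rat) \<Rightarrow> _) (*) h"
      "\<forall>x\<in>insert w B. h x = (if x = w then 1 else 0)"
    using qvp.linear_independent_extend[OF ind, of "\<lambda>x. if x = w then 1 else 0"] by blast
  have hB: "h x = 0" if "x \<in> qv.span B" for x
    by (rule qvp.linear_eq_0_on_span[OF h(1) _ that]) (use h(2) wB' in auto)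
  have hw: "h w = 1" using h(2) by simp
  define e where "e i = (\<lambda>j. if j = i then 1 else (0::rat))" for i :: 'n
  define d where "d i = h (e i)" for i
  have hrep: "h v = (\<Sum>i\<in>UNIV. v i * d i)" for v
  proof -
    have "v = (\<Sum>i\<in>UNIV. qscale (v i) (e i))"
    proof (rule ext)
      fix x
      have "(\<Sum>i\<in>UNIV. qscale (v i) (e i)) x = (\<Sum>i\<in>UNIV. if x = i then v i else 0)"
        unfolding sum_fun_apply by (rule sum.cong) (auto simp: e_def qscale_def)
      then show "v x = (\<Sum>i\<in>UNIV. qscale (v i) (e i)) x" by simp
    qed
    then have "h v = h (\<Sum>i\<in>UNIV. qscale (v i) (e i))" by simp
    also have "\<dots> = (\<Sum>i\<in>UNIV. h (qscale (v i) (e i)))" by (rule qvp.linear_sum[OF h(1)])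
    also have "\<dots> = (\<Sum>i\<in>UNIV. v i * d i)"
      unfolding d_def by (intro sum.cong refl) (rule qvp.linear_scale[OF h(1)])
    finally show ?thesis .
  qed
  obtain N where N: "N > 0" "\<forall>i\<in>UNIV. of_int N * d i \<in> \<int>" using rat_common_denom[OF finite_UNIV, of d] by blast
  obtain M where M: "M > 0" "\<forall>i\<in>UNIV. of_int M * w i \<in> \<int>" using rat_common_denom[OF finite_UNIV, of w] by blast
  have "\<forall>i. \<exists>z. of_int z = of_int N * d i"
  proof
    fix i
    have "of_int N * d i \<in> \<int>" using N(2) by blast
    then show "\<exists>z. of_int z = of_int N * d i" by (rule Ints_cases) (rule exI, rule sym)
  qed
  then obtain f where f: "\<And>i. of_int (f i) = of_int N * d i" by metis
  have "\<forall>i. \<exists>z. of_int z = of_int M * w i"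
  proof
    fix i
    have "of_int M * w i \<in> \<int>" using M(2) by blast
    then show "\<exists>z. of_int z = of_int M * w i" by (rule Ints_cases) (rule exI, rule sym)
  qed
  then obtain w' where w': "\<And>i. of_int (w' i) = of_int M * w i" by metis
  have "(\<lambda>i. of_int (w' i) :: rat) = (\<lambda>i. of_int M * w i)" by (rule ext) (rule w')
  moreover have "(\<lambda>i. of_int M * w i) \<in> kerQ A"
  proof -
    have "(\<Sum>i\<in>UNIV. of_int M * w i * of_int (Poly_Mapping.lookup (A i) j))
        = of_int M * (\<Sum>i\<in>UNIV. w i * of_int (Poly_Mapping.lookup (A i) j))" for j
      by (simp only: sum_distrib_left mult.assoc)
    then show ?thesis using w(1) unfolding kerQ_def by simp
  qed
  ultimately have w'k: "w' \<in> kerZ A" using kerQ_of_int by metis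
  have "(of_int (\<Sum>i\<in>UNIV. w' i * f i) :: rat) = (\<Sum>i\<in>UNIV. (of_int M * w i) * (of_int N * d i))"
    by (simp only: of_int_sum of_int_mult w' f)
  also have "\<dots> = of_int M * of_int N * h w"
    unfolding hrep sum_distrib_left by (intro sum.cong refl) (simp only: ac_simps)
  finally have "(of_int (\<Sum>i\<in>UNIV. w' i * f i) :: rat) = of_int M * of_int N * h w" .
  then have "(of_int (\<Sum>i\<in>UNIV. w' i * f i) :: rat) = of_int (M * N)"
    using hw by (simp only: of_int_mult mult_1_right)
  then have "(\<Sum>i\<in>UNIV. w' i * f i) = M * N" by (simp only: of_int_eq_iff)
  then have "(\<Sum>i\<in>UNIV. w' i * f i) \<noteq> 0" using M(1) N(1) by simp
  moreover have "(\<Sum>i\<in>UNIV. u i * f i) = 0" if "u \<in> C" for u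
  proof -
    have "?g u \<in> ?V" using that by (rule imageI)
    then have "?g u \<in> qv.span ?V" by (rule qv.span_base)
    then have "?g u \<in> qv.span B" unfolding spB .
    then have "h (?g u) = 0" by (rule hB)
    moreover have "(of_int (\<Sum>i\<in>UNIV. u i * f i) :: rat) = of_int N * h (?g u)"
    proof -
      have "(of_int (\<Sum>i\<in>UNIV. u i * f i) :: rat) = (\<Sum>i\<in>UNIV. of_int (u i) * (of_int N * d i))"
        by (simp only: of_int_sum of_int_mult f)
      also have "\<dots> = of_int N * h (?g u)"
        unfolding hrep sum_distrib_left by (intro sum.cong refl) (simp only: ac_simps)
      finally show ?thesis .
    qed
    ultimately have "(of_int (\<Sum>i\<in>UNIV. u i * f i) :: rat) = of_int 0" by simp
    then show ?thesis by (simp only: of_int_eq_iff)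
  qed
  ultimately show ?thesis using w'k by blast
qed





definition ext_conf :: "('n::finite \<Rightarrow> (nat \<Rightarrow>\<^sub>0 int)) \<Rightarrow> nat \<Rightarrow> ('n \<Rightarrow> int) \<Rightarrow> ('n \<Rightarrow> (nat \<Rightarrow>\<^sub>0 int))" where
  "ext_conf A m f = (\<lambda>k. A k + Poly_Mapping.single m (f k))"

lemma kerZ_ext:
  assumes "in_Zm m A"
  shows "kerZ (ext_conf A m f) = {u \<in> kerZ A. (\<Sum>i\<in>UNIV. u i * f i) = 0}"
proof -
  have A0: "Poly_Mapping.lookup (A k) m = 0" for k
    using assms unfolding in_Zm_def by (meson in_keys_iff lessThan_iff less_irrefl subsetD)
  have L: "(\<Sum>i\<in>UNIV. u i * Poly_Mapping.lookup (ext_conf A m f i) j)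
      = (\<Sum>i\<in>UNIV. u i * Poly_Mapping.lookup (A i) j) + (if j = m then (\<Sum>i\<in>UNIV. u i * f i) else 0)" for u j
    by (simp add: ext_conf_def lookup_add lookup_single when_def distrib_left sum.distrib)
  show ?thesis
  proof (intro set_eqI iffI)
    fix u assume u: "u \<in> kerZ (ext_conf A m f)"
    have s: "(\<Sum>i\<in>UNIV. u i * Poly_Mapping.lookup (A i) j) + (if j = m then (\<Sum>i\<in>UNIV. u i * f i) else 0) = 0" for j
      using u L unfolding kerZ_def by auto
    have "(\<Sum>i\<in>UNIV. u i * f i) = 0" using s[of m] by (simp add: A0)
    moreover have "u \<in> kerZ A" unfolding kerZ_def
    proof (intro CollectI allI)
      fix j show "(\<Sum>i\<in>UNIV. u i * Poly_Mapping.lookup (A i) j) = 0"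
        using s[of j] A0 by (cases "j = m") auto
    qed
    ultimately show "u \<in> {u \<in> kerZ A. (\<Sum>i\<in>UNIV. u i * f i) = 0}" by simp
  next
    fix u assume "u \<in> {u \<in> kerZ A. (\<Sum>i\<in>UNIV. u i * f i) = 0}"
    then show "u \<in> kerZ (ext_conf A m f)" unfolding kerZ_def using L by simp
  qed
qed

lemma in_Zm_ext:
  assumes "in_Zm m A" shows "in_Zm (Suc m) (ext_conf A m f)"
proof -
  have "Poly_Mapping.keys (A i + Poly_Mapping.single m (f i)) \<subseteq> {..<Suc m}" for i
  proof -
    have k1: "Poly_Mapping.keys (A i) \<subseteq> {..<m}" using assms unfolding in_Zm_def by blast
    have k2: "Poly_Mapping.keys (Poly_Mapping.single m (f i)) \<subseteq> {m}" by simp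
    have k3: "Poly_Mapping.keys (A i + Poly_Mapping.single m (f i)) \<subseteq> {..<m} \<union> {m}"
      using keys_add[of "A i" "Poly_Mapping.single m (f i)"] k1 k2 by blast
    have "{..<m} \<union> {m} = {..<Suc m}" by auto
    then show ?thesis using k3 by simp
  qed
  then show ?thesis unfolding in_Zm_def ext_conf_def by blast
qed

lemma pointed_sub: "kerZ B \<subseteq> kerZ A \<Longrightarrow> pointed A \<Longrightarrow> pointed B"
  unfolding pointed_def by blast

lemma gen_union_sub: "ideal_gen (S \<union> T) \<subseteq> ideal_sum (ideal_gen S) (ideal_gen T)"
proof
  fix p assume "p \<in> ideal_gen (S \<union> T)"
  then have "p \<in> rmod.span (S \<union> T)" unfolding ideal_gen_span .
  then show "p \<in> ideal_sum (ideal_gen S) (ideal_gen T)"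
  proof (induction rule: rmod.span_induct_alt)
    case base
    show ?case unfolding ideal_sum_def using ideal_gen_0 by force
  next
    case (step c x y)
    then obtain p1 p2 where y: "y = p1 + p2" "p1 \<in> ideal_gen S" "p2 \<in> ideal_gen T"
      unfolding ideal_sum_def by blast
    show ?case
    proof (cases "x \<in> S")
      case True
      then have "c * x + p1 \<in> ideal_gen S" using ideal_gen_add[OF ideal_gen_mult[OF ideal_gen_base] y(2)] by blast
      moreover have "c * x + y = (c * x + p1) + p2" using y(1) by (simp add: add.assoc)
      ultimately show ?thesis unfolding ideal_sum_def using y(3) by blast
    next
      case False
      then have "x \<in> T" using step(1) by blast
      then have "c * x + p2 \<in> ideal_gen T" using ideal_gen_add[OF ideal_gen_mult[OF ideal_gen_base] y(3)] by blast
      moreover have "c * x + y = p1 + (c * x + p2)" using y(1) by (simp add: ac_simps)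
      ultimately show ?thesis unfolding ideal_sum_def using y(2) by blast
    qed
  qed
qed

lemma ideal_sum_mono: "I \<subseteq> I' \<Longrightarrow> J \<subseteq> J' \<Longrightarrow> ideal_sum I J \<subseteq> ideal_sum I' J'"
  unfolding ideal_sum_def by blast

lemma gen_fin:
  assumes "p \<in> ideal_gen (binomial ` X)"
  shows "\<exists>F. finite F \<and> F \<subseteq> X \<and> p \<in> ideal_gen (binomial ` F)"
proof -
  obtain F' c where F': "finite F'" "F' \<subseteq> binomial ` X" "p = (\<Sum>f\<in>F'. c f * f)"
    using assms unfolding ideal_gen_def by blast
  obtain F where F: "F \<subseteq> X" "finite F" "F' = binomial ` F"
    using finite_subset_image[OF F'(1,2)] by blast
  have "p \<in> ideal_gen (binomial ` F)" unfolding ideal_gen_def using F' F by blast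
  then show ?thesis using F by blast
qed





theorem corollary2p2:
  fixes A :: "'n::finite \<Rightarrow> (nat \<Rightarrow>\<^sub>0 int)" and m :: nat
  assumes "in_Zm m A" and "pointed A"
  shows "radical_splittable (toric_ideal A :: ('n, 'k::field) mpoly set) \<longleftrightarrow>
    (\<exists>C C1 C2. C \<subseteq> kerZ A \<and>
       min_gen_up_to_radical ((binomial :: ('n \<Rightarrow> int) \<Rightarrow> ('n, 'k) mpoly) ` C) (toric_ideal A) \<and>
       C = C1 \<union> C2 \<and> qspan C1 \<subset> kerQ A \<and> qspan C2 \<subset> kerQ A)"
proof
  let ?I = "toric_ideal A :: ('n, 'k) mpoly set"
  let ?B = "binomial :: ('n \<Rightarrow> int) \<Rightarrow> ('n, 'k) mpoly"
  assume "radical_splittable ?I"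
  then obtain m1 m2 and A1 A2 :: "'n \<Rightarrow> (nat \<Rightarrow>\<^sub>0 int)" where
    h: "in_Zm m1 A1" "pointed A1" "in_Zm m2 A2" "pointed A2"
    and eqI: "?I = radical (ideal_sum (toric_ideal A1) (toric_ideal A2))"
    and ne1: "toric_ideal A1 \<noteq> ?I" and ne2: "toric_ideal A2 \<noteq> ?I"
    unfolding radical_splittable_def by blast
  have sub1: "toric_ideal A1 \<subseteq> ?I"
  proof
    fix p assume "p \<in> (toric_ideal A1 :: ('n, 'k) mpoly set)"
    then have "p + 0 \<in> ideal_sum (toric_ideal A1) (toric_ideal A2)" unfolding ideal_sum_def using toric_0 by blast
    then show "p \<in> ?I" unfolding eqI using radical_sub by auto
  qed
  have sub2: "toric_ideal A2 \<subseteq> ?I"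
  proof
    fix p assume "p \<in> (toric_ideal A2 :: ('n, 'k) mpoly set)"
    then have "0 + p \<in> ideal_sum (toric_ideal A1) (toric_ideal A2)" unfolding ideal_sum_def using toric_0 by blast
    then show "p \<in> ?I" unfolding eqI using radical_sub by auto
  qed
  have ker1: "kerZ A1 \<subseteq> kerZ A"
  proof
    fix u assume "u \<in> kerZ A1"
    then have "?B u \<in> toric_ideal A1" by (simp add: binomial_in_toric)
    then have "?B u \<in> ?I" using sub1 by blast
    then show "u \<in> kerZ A" by (simp add: binomial_in_toric)
  qed
  have ker2: "kerZ A2 \<subseteq> kerZ A"
  proof
    fix u assume "u \<in> kerZ A2"
    then have "?B u \<in> toric_ideal A2" by (simp add: binomial_in_toric)
    then have "?B u \<in> ?I" using sub2 by blast
    then show "u \<in> kerZ A" by (simp add: binomial_in_toric)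
  qed
  obtain K where K: "finite K" "K \<subseteq> kerZ A" "?I \<subseteq> ideal_gen (?B ` K)"
    using toric_fin[OF assms(2), where 'k='k] by blast
  have "\<exists>G. finite G \<and> G \<subseteq> kerZ A1 \<union> kerZ A2 \<and> ?B u \<in> radical (ideal_gen (?B ` G))" if u: "u \<in> K" for u
  proof -
    have "?B u \<in> ?I" using u K(2) by (auto simp: binomial_in_toric)
    then obtain k where "?B u ^ k \<in> ideal_sum (toric_ideal A1) (toric_ideal A2)"
      unfolding eqI radical_def by blast
    then obtain q1 q2 where q: "?B u ^ k = q1 + q2" "q1 \<in> toric_ideal A1" "q2 \<in> toric_ideal A2"
      unfolding ideal_sum_def by blast
    obtain F1 where F1: "finite F1" "F1 \<subseteq> kerZ A1" "q1 \<in> ideal_gen (?B ` F1)"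
      using gen_fin[of q1 "kerZ A1"] q(2) toric_eq_gen[of A1] by blast
    obtain F2 where F2: "finite F2" "F2 \<subseteq> kerZ A2" "q2 \<in> ideal_gen (?B ` F2)"
      using gen_fin[of q2 "kerZ A2"] q(3) toric_eq_gen[of A2] by blast
    have "q1 \<in> ideal_gen (?B ` (F1 \<union> F2))" using F1(3) ideal_gen_mono[of "?B ` F1" "?B ` (F1 \<union> F2)"] by blast
    moreover have "q2 \<in> ideal_gen (?B ` (F1 \<union> F2))" using F2(3) ideal_gen_mono[of "?B ` F2" "?B ` (F1 \<union> F2)"] by blast
    ultimately have "?B u ^ k \<in> ideal_gen (?B ` (F1 \<union> F2))" unfolding q(1) by (rule ideal_gen_add)
    then have "?B u \<in> radical (ideal_gen (?B ` (F1 \<union> F2)))" unfolding radical_def by blast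
    then show ?thesis using F1 F2 by (intro exI[of _ "F1 \<union> F2"]) auto
  qed
  then obtain G where G: "\<And>u. u \<in> K \<Longrightarrow> finite (G u) \<and> G u \<subseteq> kerZ A1 \<union> kerZ A2 \<and> ?B u \<in> radical (ideal_gen (?B ` G u))"
    by metis
  define Good where "Good C \<longleftrightarrow> finite C \<and> C \<subseteq> kerZ A1 \<union> kerZ A2 \<and> radical (ideal_gen (?B ` C)) = ?I" for C
  have Good_le: "radical (ideal_gen (?B ` C)) \<subseteq> ?I" if "C \<subseteq> kerZ A1 \<union> kerZ A2" for C
  proof -
    have "C \<subseteq> kerZ A" using that ker1 ker2 by blast
    then have "?B ` C \<subseteq> ?I" by (auto simp: binomial_in_toric)
    then have "ideal_gen (?B ` C) \<subseteq> ?I" by (rule ideal_gen_toric)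
    then show ?thesis using radical_mono radical_toric by metis
  qed
  define C0 where "C0 = (\<Union>u\<in>K. G u)"
  have "Good C0"
  proof -
    have fin: "finite C0" unfolding C0_def using K(1) G by auto
    have sub: "C0 \<subseteq> kerZ A1 \<union> kerZ A2" unfolding C0_def using G by blast
    have "?B ` K \<subseteq> radical (ideal_gen (?B ` C0))"
    proof
      fix p assume "p \<in> ?B ` K"
      then obtain u where u: "u \<in> K" "p = ?B u" by blast
      have "G u \<subseteq> C0" unfolding C0_def using u(1) by blast
      then have "radical (ideal_gen (?B ` G u)) \<subseteq> radical (ideal_gen (?B ` C0))"
        by (intro radical_mono ideal_gen_mono image_mono)
      then show "p \<in> radical (ideal_gen (?B ` C0))" using G[OF u(1)] u(2) by blast
    qed
    then have "radical (ideal_gen (?B ` K)) \<subseteq> radical (ideal_gen (?B ` C0))" by (rule radical_gen_subset)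
    then have "?I \<subseteq> radical (ideal_gen (?B ` C0))" using K(3) radical_sub by blast
    then show ?thesis unfolding Good_def using fin sub Good_le[OF sub] by blast
  qed
  then obtain C where C: "Good C" and Cmin: "\<And>C'. Good C' \<Longrightarrow> card C \<le> card C'"
    using ex_has_least_nat[of Good C0 card] by blast
  have Cfin: "finite C" and Csub: "C \<subseteq> kerZ A1 \<union> kerZ A2" and Crad: "radical (ideal_gen (?B ` C)) = ?I"
    using C unfolding Good_def by auto
  have mg: "min_gen_up_to_radical (?B ` C) ?I"
    unfolding min_gen_up_to_radical_def
  proof (intro conjI allI impI)
    show "radical (ideal_gen (?B ` C)) = ?I" by (rule Crad)
    fix S' assume S': "S' \<subset> ?B ` C"
    define C' where "C' = {u \<in> C. ?B u \<in> S'}"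
    have imgC': "?B ` C' = S'" unfolding C'_def using S' by blast
    have "C' \<subseteq> C" unfolding C'_def by blast
    moreover have "C' \<noteq> C" using imgC' S' by blast
    ultimately have lt: "card C' < card C" using Cfin by (meson psubsetI psubset_card_mono)
    show "radical (ideal_gen S') \<noteq> ?I"
    proof
      assume "radical (ideal_gen S') = ?I"
      then have "Good C'" unfolding Good_def imgC'[symmetric] using Cfin Csub \<open>C' \<subseteq> C\<close>
        by (meson finite_subset subset_trans)
      then show False using Cmin lt by fastforce
    qed
  qed
  have CK: "C \<subseteq> kerZ A" using Csub ker1 ker2 by blast
  define C1 where "C1 = C \<inter> kerZ A1"
  define C2 where "C2 = C - kerZ A1"
  have C12: "C = C1 \<union> C2" unfolding C1_def C2_def by blast
  have C1k: "C1 \<subseteq> kerZ A1" and C2k: "C2 \<subseteq> kerZ A2" unfolding C1_def C2_def using Csub by auto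
  have strict: "qspan Ci \<subset> kerQ A" if Ci: "Ci \<subseteq> C" "Ci \<subseteq> kerZ Ai" and ki: "kerZ Ai \<subseteq> kerZ A"
    and nei: "toric_ideal Ai \<noteq> ?I" and subi: "toric_ideal Ai \<subseteq> ?I" for Ci Ai
  proof -
    have le: "qspan Ci \<subseteq> kerQ A" using Ci(1) CK by (intro qspan_sub_kerQ) blast
    have "qspan Ci \<noteq> kerQ A"
    proof
      assume eq: "qspan Ci = kerQ A"
      have "qspan Ci \<subseteq> kerQ Ai" using Ci(2) by (rule qspan_sub_kerQ)
      then have "kerZ A \<subseteq> kerZ Ai" using eq kerQ_of_int by blast
      then have "?I \<subseteq> toric_ideal Ai"
        unfolding toric_eq_gen[of A] toric_eq_gen[of Ai] by (intro ideal_gen_mono image_mono)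
      then show False using subi nei by blast
    qed
    then show ?thesis using le by blast
  qed
  have "qspan C1 \<subset> kerQ A" by (rule strict) (use C1_def C1k ker1 ne1 sub1 in auto)
  moreover have "qspan C2 \<subset> kerQ A" by (rule strict) (use C2_def C2k ker2 ne2 sub2 in auto)
  ultimately show "\<exists>C C1 C2. C \<subseteq> kerZ A \<and> min_gen_up_to_radical (?B ` C) ?I \<and>
       C = C1 \<union> C2 \<and> qspan C1 \<subset> kerQ A \<and> qspan C2 \<subset> kerQ A"
    using CK mg C12 by blast
next
  let ?I = "toric_ideal A :: ('n, 'k) mpoly set"
  let ?B = "binomial :: ('n \<Rightarrow> int) \<Rightarrow> ('n, 'k) mpoly"
  assume "\<exists>C C1 C2. C \<subseteq> kerZ A \<and> min_gen_up_to_radical (?B ` C) ?I \<and>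
       C = C1 \<union> C2 \<and> qspan C1 \<subset> kerQ A \<and> qspan C2 \<subset> kerQ A"
  then obtain C C1 C2 where CK: "C \<subseteq> kerZ A" and mg: "min_gen_up_to_radical (?B ` C) ?I"
    and CU: "C = C1 \<union> C2" and p1: "qspan C1 \<subset> kerQ A" and p2: "qspan C2 \<subset> kerQ A" by blast
  have C1K: "C1 \<subseteq> kerZ A" and C2K: "C2 \<subseteq> kerZ A" using CK CU by auto
  obtain f1 w1 where f1: "\<forall>u\<in>C1. (\<Sum>i\<in>UNIV. u i * f1 i) = 0" and w1: "w1 \<in> kerZ A" "(\<Sum>i\<in>UNIV. w1 i * f1 i) \<noteq> 0"
    using separate[OF C1K p1] by blast
  obtain f2 w2 where f2: "\<forall>u\<in>C2. (\<Sum>i\<in>UNIV. u i * f2 i) = 0" and w2: "w2 \<in> kerZ A" "(\<Sum>i\<in>UNIV. w2 i * f2 i) \<noteq> 0"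
    using separate[OF C2K p2] by blast
  define A1 where "A1 = ext_conf A m f1"
  define A2 where "A2 = ext_conf A m f2"
  have k1: "kerZ A1 = {u \<in> kerZ A. (\<Sum>i\<in>UNIV. u i * f1 i) = 0}" unfolding A1_def by (rule kerZ_ext[OF assms(1)])
  have k2: "kerZ A2 = {u \<in> kerZ A. (\<Sum>i\<in>UNIV. u i * f2 i) = 0}" unfolding A2_def by (rule kerZ_ext[OF assms(1)])
  have ks1: "kerZ A1 \<subseteq> kerZ A" and ks2: "kerZ A2 \<subseteq> kerZ A" using k1 k2 by auto
  have sub1: "toric_ideal A1 \<subseteq> ?I"
    unfolding toric_eq_gen[of A1] toric_eq_gen[of A] using ks1 by (intro ideal_gen_mono image_mono)
  have sub2: "toric_ideal A2 \<subseteq> ?I"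
    unfolding toric_eq_gen[of A2] toric_eq_gen[of A] using ks2 by (intro ideal_gen_mono image_mono)
  have C1k: "C1 \<subseteq> kerZ A1" using k1 C1K f1 by blast
  have C2k: "C2 \<subseteq> kerZ A2" using k2 C2K f2 by blast
  have eq: "?I = radical (ideal_sum (toric_ideal A1) (toric_ideal A2))"
  proof
    have "ideal_gen (?B ` C) \<subseteq> ideal_sum (ideal_gen (?B ` C1)) (ideal_gen (?B ` C2))"
      unfolding CU image_Un by (rule gen_union_sub)
    also have "\<dots> \<subseteq> ideal_sum (toric_ideal A1) (toric_ideal A2)"
    proof (rule ideal_sum_mono)
      show "ideal_gen (?B ` C1) \<subseteq> toric_ideal A1"
        by (rule ideal_gen_toric) (use C1k in \<open>auto simp: binomial_in_toric\<close>)
      show "ideal_gen (?B ` C2) \<subseteq> toric_ideal A2"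
        by (rule ideal_gen_toric) (use C2k in \<open>auto simp: binomial_in_toric\<close>)
    qed
    finally have "radical (ideal_gen (?B ` C)) \<subseteq> radical (ideal_sum (toric_ideal A1) (toric_ideal A2))"
      by (rule radical_mono)
    then show "?I \<subseteq> radical (ideal_sum (toric_ideal A1) (toric_ideal A2))"
      using mg unfolding min_gen_up_to_radical_def by simp
  next
    have "ideal_sum (toric_ideal A1) (toric_ideal A2) \<subseteq> ?I"
      unfolding ideal_sum_def using sub1 sub2 toric_add by blast
    then show "radical (ideal_sum (toric_ideal A1) (toric_ideal A2)) \<subseteq> ?I"
      using radical_mono radical_toric by metis
  qed
  have n1: "toric_ideal A1 \<noteq> ?I"
  proof
    assume "toric_ideal A1 = ?I"
    moreover have "?B w1 \<in> ?I" using w1(1) by (simp add: binomial_in_toric)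
    moreover have "?B w1 \<notin> toric_ideal A1" using w1(2) k1 by (simp add: binomial_in_toric)
    ultimately show False by simp
  qed
  have n2: "toric_ideal A2 \<noteq> ?I"
  proof
    assume "toric_ideal A2 = ?I"
    moreover have "?B w2 \<in> ?I" using w2(1) by (simp add: binomial_in_toric)
    moreover have "?B w2 \<notin> toric_ideal A2" using w2(2) k2 by (simp add: binomial_in_toric)
    ultimately show False by simp
  qed
  have "in_Zm (Suc m) A1" "in_Zm (Suc m) A2" unfolding A1_def A2_def using in_Zm_ext[OF assms(1)] by auto
  moreover have "pointed A1" "pointed A2" using pointed_sub[OF ks1 assms(2)] pointed_sub[OF ks2 assms(2)] by auto
  ultimately show "radical_splittable ?I"
    unfolding radical_splittable_def using eq n1 n2 by blast
qed




end
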